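(* Let $k\in\mathbb N$, $\xi'=(\xi_1,\dots,\xi_{k+1})\in\mathcal P_0^{k+1}$ with $\xi_1=z$, and $\xi=(\xi_1,\dots,\xi_k)$. Then $\pi_{\xi'}(p)\le\pi_\xi(p)$ for all $p\in\mathbb C[z]$. Moreover, if $U$ is a connected open subset of $\gamma(\xi)\mathbb D$ with $0\in U$ and $\xi_{k+1}(U)\subseteq\mathbb D$, and $q\in\mathbb C[z]\setminus\{0\}$ is a divisor of $\xi_{k+1}$ (in $\mathbb C[z]$) with all its zeros in $U$, then $\pi_{\xi,q}(p)\le\pi_{\xi'}(p)$ for every $p\in\mathbb C[z]$.
   Context: $\mathbb D$ is the open unit disk, $\mathcal P_0=\{p\in\mathbb C[z]:p(0)=0\}$. For $k\in\mathbb N$, $\mathcal A^{[k]}$ is the Banach algebra of power series $a=\sum_{n\in\mathbb Z_+^k}a_nu_1^{n_1}\cdots u_k^{n_k}$ with $\|a\|_{[k]}=\sum|a_n|<\infty$ (functions continuous on the closed polydisk, holomorphic on $\mathbb D^k$). For $\xi\in\mathcal P_0^k$, $\gamma(\xi)=\sup\{c>0:\xi_j(c\mathbb D)\subseteq\mathbb D,\ 1\le j\le k\}$ and $\Phi_\xi(a)(z)=a(\xi_1(z),\dots,\xi_k(z))$, a holomorphic function on $\gamma(\xi)\mathbb D$. When $\xi_1=z$, every polynomial lies in $\Phi_\xi(\mathcal A^{[k]})$, and one defines $\pi_\xi(p)=\inf\{\|a\|_{[k]}:a\in\mathcal A^{[k]},\ \Phi_\xi(a)=p\}$. For a nonzero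 polynomial $q$ with all zeros in $\gamma(\xi)\mathbb D$ and $f$ holomorphic on $\gamma(\xi)\mathbb D$, $q\mid f$ means every zero of $q$ of order $j$ is a zero of $f$ of order $\ge j$; then $\pi_{\xi,q}(p)=\inf\{\|a\|_{[k]}:a\in\mathcal A^{[k]},\ q\mid(p-\Phi_\xi(a))\}$. *)

theory Defs
  imports "HOL-Analysis.Analysis" "HOL-Computational_Algebra.Polynomial"
begin

text \<open>Multi-indices in Z_+^k are represented as functions nat => nat vanishing
  from index k on; coordinate u_(i+1) of the paper corresponds to index i.\<close>
definition multi_idx :: "nat \<Rightarrow> (nat \<Rightarrow> nat) set" where
  "multi_idx k = {n. \<forall>i. k \<le> i \<longrightarrow> n i = 0}"

definition Aalg :: "nat \<Rightarrow> ((nat \<Rightarrow> nat) \<Rightarrow> complex) set" where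
  "Aalg k = {a. (\<forall>n. n \<notin> multi_idx k \<longrightarrow> a n = 0) \<and> (\<lambda>n. norm (a n)) summable_on multi_idx k}"

definition normA :: "nat \<Rightarrow> ((nat \<Rightarrow> nat) \<Rightarrow> complex) \<Rightarrow> real" where
  "normA k a = (\<Sum>\<^sub>\<infinity>n\<in>multi_idx k. norm (a n))"

text \<open>gamma(xi) for xi = (xi 0, ..., xi (k-1)).\<close>
definition gammaP :: "nat \<Rightarrow> (nat \<Rightarrow> complex poly) \<Rightarrow> real" where
  "gammaP k \<xi> = Sup {c. c > 0 \<and> (\<forall>j<k. poly (\<xi> j) ` ball 0 c \<subseteq> ball 0 1)}"

definition Phi :: "nat \<Rightarrow> (nat \<Rightarrow> complex poly) \<Rightarrow> ((nat \<Rightarrow> nat) \<Rightarrow> complex) \<Rightarrow> complex \<Rightarrow> complex" where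
  "Phi k \<xi> a z = (\<Sum>\<^sub>\<infinity>n\<in>multi_idx k. a n * (\<Prod>i<k. poly (\<xi> i) z ^ n i))"

text \<open>q | f: every zero w of q of order j is a zero of f of order at least j,
  i.e. the derivatives of f of order < j vanish at w.\<close>
definition pdivides :: "complex poly \<Rightarrow> (complex \<Rightarrow> complex) \<Rightarrow> bool" where
  "pdivides q f = (\<forall>w. poly q w = 0 \<longrightarrow> (\<forall>i < order w q. (deriv ^^ i) f w = 0))"

definition piX :: "nat \<Rightarrow> (nat \<Rightarrow> complex poly) \<Rightarrow> complex poly \<Rightarrow> real" where
  "piX k \<xi> p = Inf {normA k a | a. a \<in> Aalg k \<and>
      (\<forall>z\<in>ball 0 (gammaP k \<xi>). Phi k \<xi> a z = poly p z)}"

definition piXq :: "nat \<Rightarrow> (nat \<Rightarrow> complex poly) \<Rightarrow> complex poly \<Rightarrow> complex poly \<Rightarrow> real" where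
  "piXq k \<xi> q p = Inf {normA k a | a. a \<in> Aalg k \<and>
      pdivides q (\<lambda>z. poly p z - Phi k \<xi> a z)}"

end

theory Submission
  imports Defs "HOL-Complex_Analysis.Complex_Analysis"
begin


definition GS :: "nat \<Rightarrow> (nat \<Rightarrow> complex poly) \<Rightarrow> real set" where
  "GS m \<xi> = {c. c > 0 \<and> (\<forall>j<m. poly (\<xi> j) ` ball 0 c \<subseteq> ball 0 1)}"

lemma GS_nonempty:
  assumes "\<forall>j<m. poly (\<xi> j) 0 = 0"
  shows "\<exists>c. c \<in> GS m \<xi>"
  using assms
proof (induction m)
  case 0
  then show ?case by (auto simp: GS_def intro: exI[of _ 1])
next
  case (Suc m)
  then obtain c where c: "c \<in> GS m \<xi>" by auto
  have "isCont (poly (\<xi> m)) 0" by simp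
  then obtain d where d: "d > 0" "\<And>y. dist y 0 < d \<Longrightarrow> dist (poly (\<xi> m) y) (poly (\<xi> m) 0) < 1"
    unfolding continuous_at_eps_delta by (meson zero_less_one)
  have "min c d \<in> GS (Suc m) \<xi>"
    using c d Suc.prems unfolding GS_def
    by (auto simp: less_Suc_eq dist_norm) (fastforce simp: subset_iff)+
  then show ?case by blast
qed

lemma GS_bdd:
  assumes "m \<ge> 1" "\<xi> 0 = [:0, 1:]" "c \<in> GS m \<xi>"
  shows "c \<le> 1"
proof (rule ccontr)
  assume "\<not> c \<le> 1"
  then have "(1::complex) \<in> ball 0 c" by simp
  then have "poly (\<xi> 0) 1 \<in> ball 0 1" using assms unfolding GS_def by fastforce
  then show False using assms by simp
qed

lemma gammaP_eq: "gammaP m \<xi> = Sup (GS m \<xi>)"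
  by (simp add: gammaP_def GS_def)

lemma gammaP_pos:
  assumes "m \<ge> 1" "\<xi> 0 = [:0, 1:]" "\<forall>j<m. poly (\<xi> j) 0 = 0"
  shows "gammaP m \<xi> > 0"
proof -
  obtain c where c: "c \<in> GS m \<xi>" using GS_nonempty assms by blast
  have "c \<le> gammaP m \<xi>" unfolding gammaP_eq
    using c GS_bdd[of m \<xi>, OF assms(1,2)] by (intro cSup_upper) (auto simp: bdd_above_def)
  moreover have "c > 0" using c by (simp add: GS_def)
  ultimately show ?thesis by simp
qed

lemma gammaP_ball:
  assumes "m \<ge> 1" "\<xi> 0 = [:0, 1:]" "\<forall>j<m. poly (\<xi> j) 0 = 0"
    and "z \<in> ball 0 (gammaP m \<xi>)" "j < m"
  shows "norm (poly (\<xi> j) z) < 1"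
proof -
  have "norm z < Sup (GS m \<xi>)" using assms(4) by (simp add: gammaP_eq)
  then obtain c where c: "c \<in> GS m \<xi>" "norm z < c"
    using GS_nonempty[OF assms(3)] GS_bdd[of m \<xi>, OF assms(1,2)]
    by (subst (asm) less_cSup_iff) (auto simp: bdd_above_def)
  then show ?thesis using assms(5) unfolding GS_def by force
qed

lemma gammaP_mono:
  assumes "m \<ge> 1" "\<xi> 0 = [:0, 1:]" "\<forall>j<m+1. poly (\<xi> j) 0 = 0"
  shows "gammaP (m+1) \<xi> \<le> gammaP m \<xi>"
  unfolding gammaP_eq
proof (rule cSup_subset_mono)
  show "GS (m + 1) \<xi> \<noteq> {}" using GS_nonempty[OF assms(3)] by blast
  show "bdd_above (GS m \<xi>)" using GS_bdd[of m \<xi>, OF assms(1,2)] by (auto simp: bdd_above_def)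
  show "GS (m + 1) \<xi> \<subseteq> GS m \<xi>" unfolding GS_def by (auto simp: subset_iff) (metis image_eqI less_SucI mem_ball_0)
qed



definition tm :: "nat \<Rightarrow> (nat \<Rightarrow> complex poly) \<Rightarrow> ((nat \<Rightarrow> nat) \<Rightarrow> complex) \<Rightarrow> (nat \<Rightarrow> nat) \<Rightarrow> complex \<Rightarrow> complex" where
  "tm m \<xi> a n z = a n * (\<Prod>i<m. poly (\<xi> i) z ^ n i)"

lemma Phi_tm: "Phi m \<xi> a z = (\<Sum>\<^sub>\<infinity>n\<in>multi_idx m. tm m \<xi> a n z)"
  by (simp add: Phi_def tm_def)

definition VV :: "nat \<Rightarrow> (nat \<Rightarrow> complex poly) \<Rightarrow> complex set" where
  "VV m \<xi> = {z. \<forall>j<m. norm (poly (\<xi> j) z) < 1}"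

lemma open_VV: "open (VV m \<xi>)"
proof -
  have "VV m \<xi> = (\<Inter>j\<in>{..<m}. {z. norm (poly (\<xi> j) z) < 1})"
    by (auto simp: VV_def)
  moreover have "open {z. norm (poly (\<xi> j) z) < 1}" for j
    by (intro open_Collect_less continuous_intros)
  ultimately show ?thesis by auto
qed

lemma prod_le1:
  fixes m :: nat and \<xi> :: "nat \<Rightarrow> complex poly" and n :: "nat \<Rightarrow> nat"
  assumes "\<forall>j<m. norm (poly (\<xi> j) z) \<le> 1"
  shows "norm (\<Prod>i<m. poly (\<xi> i) z ^ n i) \<le> 1"
proof -
  have "norm (\<Prod>i<m. poly (\<xi> i) z ^ n i) = (\<Prod>i<m. norm (poly (\<xi> i) z) ^ n i)"
    by (induction m rule: nat.induct) (auto simp: norm_mult norm_power)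
  also have "\<dots> \<le> 1"
    using assms by (intro prod_le_1) (auto intro: power_le_one)
  finally show ?thesis .
qed

lemma tm_norm_le:
  assumes "\<forall>j<m. norm (poly (\<xi> j) z) \<le> 1"
  shows "norm (tm m \<xi> a n z) \<le> norm (a n)"
  unfolding tm_def norm_mult using prod_le1[OF assms, of n]
  by (simp add: mult_left_le)

lemma Aalg_norm_summable: "a \<in> Aalg m \<Longrightarrow> (\<lambda>n. norm (a n)) summable_on multi_idx m"
  by (simp add: Aalg_def)

lemma tm_summable:
  assumes "a \<in> Aalg m" "\<forall>j<m. norm (poly (\<xi> j) z) \<le> 1" "A \<subseteq> multi_idx m"
  shows "(\<lambda>n. tm m \<xi> a n z) summable_on A"
proof -
  have "(\<lambda>n. norm (tm m \<xi> a n z)) summable_on multi_idx m"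
    by (rule Infinite_Sum.abs_summable_on_comparison_test[of a, OF Aalg_norm_summable[OF assms(1)]])
       (use tm_norm_le[OF assms(2)] in auto)
  then have "(\<lambda>n. tm m \<xi> a n z) summable_on multi_idx m"
    by (rule Infinite_Sum.abs_summable_summable)
  then show ?thesis using assms(3) summable_on_subset_banach by blast
qed

lemma Phi_holo:
  assumes "a \<in> Aalg m"
  shows "Phi m \<xi> a holomorphic_on VV m \<xi>"
proof -
  have "Phi m \<xi> a field_differentiable (at z)" if z: "z \<in> VV m \<xi>" for z
  proof -
    obtain r where r: "r > 0" "cball z r \<subseteq> VV m \<xi>"
      using open_VV z open_contains_cball by blast
    have ul: "uniform_limit (cball z r) (\<lambda>X y. \<Sum>x\<in>X. tm m \<xi> a x y)
       (\<lambda>y. \<Sum>\<^sub>\<infinity>x\<in>multi_idx m. tm m \<xi> a x y) (finite_subsets_at_top (multi_idx m))"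
    proof (rule Weierstrass_m_test_general)
      show "norm (tm m \<xi> a x y) \<le> norm (a x)" if "x \<in> multi_idx m" "y \<in> cball z r" for x y
        using that r by (intro tm_norm_le) (auto simp: VV_def less_imp_le subset_iff)
      show "(\<lambda>n. norm (a n)) summable_on multi_idx m" using assms by (rule Aalg_norm_summable)
    qed
    have ev: "\<forall>\<^sub>F n in finite_subsets_at_top (multi_idx m).
          continuous_on (cball z r) (\<lambda>y. \<Sum>x\<in>n. tm m \<xi> a x y) \<and>
          (\<lambda>y. \<Sum>x\<in>n. tm m \<xi> a x y) holomorphic_on ball z r"
        by (intro always_eventually allI conjI) (auto simp: tm_def intro!: continuous_intros holomorphic_intros)
    have nt: "\<not> trivial_limit (finite_subsets_at_top (multi_idx m))"
        by (simp add: finite_subsets_at_top_neq_bot)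
    obtain "(\<lambda>y. \<Sum>\<^sub>\<infinity>x\<in>multi_idx m. tm m \<xi> a x y) holomorphic_on ball z r"
      using holomorphic_uniform_limit[OF ev ul nt] by blast
    then have "Phi m \<xi> a holomorphic_on ball z r" by (simp add: Phi_tm[abs_def])
    then show ?thesis using r(1)
      by (meson centre_in_ball holomorphic_on_imp_differentiable_at open_ball)
  qed
  then show ?thesis
    by (simp add: field_differentiable_at_within holomorphic_on_def)
qed



definition rst :: "nat \<Rightarrow> ((nat \<Rightarrow> nat) \<Rightarrow> complex) \<Rightarrow> (nat \<Rightarrow> nat) \<Rightarrow> complex" where
  "rst k b n = (if n \<in> multi_idx k then b n else 0)"

definition shf :: "nat \<Rightarrow> ((nat \<Rightarrow> nat) \<Rightarrow> complex) \<Rightarrow> (nat \<Rightarrow> nat) \<Rightarrow> complex" where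
  "shf k b n = (if n \<in> multi_idx (Suc k) then b (n(k := Suc (n k))) else 0)"

lemma multi_idx_mono: "multi_idx k \<subseteq> multi_idx (Suc k)"
  by (auto simp: multi_idx_def)

lemma multi_idx_k: "multi_idx k = {n \<in> multi_idx (Suc k). n k = 0}"
proof (rule set_eqI)
  fix n :: "nat \<Rightarrow> nat"
  have "(\<forall>i. k \<le> i \<longrightarrow> n i = 0) \<longleftrightarrow> (\<forall>i. Suc k \<le> i \<longrightarrow> n i = 0) \<and> n k = 0"
    by (metis Suc_leD le_antisym not_less_eq_eq order_refl)
  then show "n \<in> multi_idx k \<longleftrightarrow> n \<in> {n \<in> multi_idx (Suc k). n k = 0}"
    by (simp add: multi_idx_def)
qed

lemma inj_shift: "inj_on (\<lambda>n. n(k := Suc (n k))) A"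
  by (auto simp: inj_on_def fun_eq_iff)

lemma image_shift: "(\<lambda>n. n(k := Suc (n k))) ` multi_idx (Suc k) = {n \<in> multi_idx (Suc k). n k \<noteq> 0}"
proof (rule set_eqI, rule iffI)
  fix n assume "n \<in> {n \<in> multi_idx (Suc k). n k \<noteq> 0}"
  then have n: "n \<in> multi_idx (Suc k)" "n k \<noteq> 0" by auto
  then have "n = (n(k := n k - 1))(k := Suc ((n(k := n k - 1)) k))" by auto
  moreover have "n(k := n k - 1) \<in> multi_idx (Suc k)" using n by (auto simp: multi_idx_def)
  ultimately show "n \<in> (\<lambda>n. n(k := Suc (n k))) ` multi_idx (Suc k)" by blast
next
  fix n assume "n \<in> (\<lambda>n. n(k := Suc (n k))) ` multi_idx (Suc k)"
  then show "n \<in> {n \<in> multi_idx (Suc k). n k \<noteq> 0}" by (auto simp: multi_idx_def)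
qed

lemma rst_Aalg: "b \<in> Aalg (Suc k) \<Longrightarrow> rst k b \<in> Aalg k"
proof -
  assume b: "b \<in> Aalg (Suc k)"
  have "(\<lambda>n. norm (b n)) summable_on multi_idx (Suc k)" using b by (simp add: Aalg_def)
  then have "(\<lambda>n. norm (b n)) summable_on multi_idx k"
    using multi_idx_mono summable_on_subset_banach by blast
  then have "(\<lambda>n. norm (rst k b n)) summable_on multi_idx k"
    by (rule summable_on_cong[THEN iffD1, rotated]) (auto simp: rst_def)
  then show ?thesis by (auto simp: Aalg_def rst_def)
qed

lemma rst_norm: "b \<in> Aalg (Suc k) \<Longrightarrow> normA k (rst k b) \<le> normA (Suc k) b"
  unfolding normA_def
proof (rule infsum_mono_neutral)
  assume b: "b \<in> Aalg (Suc k)"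
  show "(\<lambda>n. norm (rst k b n)) summable_on multi_idx k" using rst_Aalg[OF b] by (simp add: Aalg_def)
  show "(\<lambda>n. norm (b n)) summable_on multi_idx (Suc k)" using b by (simp add: Aalg_def)
qed (use multi_idx_mono in \<open>auto simp: rst_def\<close>)

lemma shf_Aalg: "b \<in> Aalg (Suc k) \<Longrightarrow> shf k b \<in> Aalg (Suc k)"
proof -
  assume b: "b \<in> Aalg (Suc k)"
  let ?h = "\<lambda>n. n(k := Suc (n k))"
  have "(\<lambda>n. norm (b n)) summable_on multi_idx (Suc k)" using b by (simp add: Aalg_def)
  then have "(\<lambda>n. norm (b n)) summable_on ?h ` multi_idx (Suc k)"
    unfolding image_shift by (rule summable_on_subset_banach) auto
  then have "((\<lambda>n. norm (b n)) \<circ> ?h) summable_on multi_idx (Suc k)"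
    by (rule iffD1[OF summable_on_reindex[OF inj_shift]])
  then have "(\<lambda>n. norm (shf k b n)) summable_on multi_idx (Suc k)"
    by (rule summable_on_cong[THEN iffD1, rotated]) (auto simp: shf_def)
  then show ?thesis by (auto simp: Aalg_def shf_def)
qed

lemma Phi_split:
  assumes b: "b \<in> Aalg (Suc k)" and z: "\<forall>j<Suc k. norm (poly (\<xi> j) z) \<le> 1"
  shows "Phi (Suc k) \<xi> b z = Phi k \<xi> (rst k b) z + poly (\<xi> k) z * Phi (Suc k) \<xi> (shf k b) z"
proof -
  let ?h = "\<lambda>n. n(k := Suc (n k))"
  let ?T = "\<lambda>n. tm (Suc k) \<xi> b n z"
  define A1 where "A1 = {n \<in> multi_idx (Suc k). n k \<noteq> 0}"
  have un: "multi_idx (Suc k) = multi_idx k \<union> A1"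
    unfolding A1_def by (subst multi_idx_k) auto
  have dis: "multi_idx k \<inter> A1 = {}" unfolding A1_def by (subst multi_idx_k) auto
  have "Phi (Suc k) \<xi> b z = infsum ?T (multi_idx k) + infsum ?T A1"
    unfolding Phi_tm un
    by (rule infsum_Un_disjoint[OF _ _ dis]; rule tm_summable[OF b z])
       (use un in auto)
  moreover have "infsum ?T (multi_idx k) = Phi k \<xi> (rst k b) z"
    unfolding Phi_tm
  proof (rule infsum_cong)
    fix n assume n: "n \<in> multi_idx k"
    then have "n k = 0" by (simp add: multi_idx_def)
    then show "?T n = tm k \<xi> (rst k b) n z" using n by (simp add: tm_def rst_def)
  qed
  moreover have "infsum ?T A1 = poly (\<xi> k) z * Phi (Suc k) \<xi> (shf k b) z"
  proof -
    have "infsum ?T A1 = infsum (?T \<circ> ?h) (multi_idx (Suc k))"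
      unfolding A1_def image_shift[symmetric] by (rule infsum_reindex[OF inj_shift])
    also have "\<dots> = (\<Sum>\<^sub>\<infinity>n\<in>multi_idx (Suc k). poly (\<xi> k) z * tm (Suc k) \<xi> (shf k b) n z)"
    proof (rule infsum_cong)
      fix n assume n: "n \<in> multi_idx (Suc k)"
      have "(\<Prod>i<k. poly (\<xi> i) z ^ (n(k := Suc (n k))) i) = (\<Prod>i<k. poly (\<xi> i) z ^ n i)"
        by (rule prod.cong) auto
      then show "(?T \<circ> ?h) n = poly (\<xi> k) z * tm (Suc k) \<xi> (shf k b) n z"
        using n by (simp add: tm_def shf_def)
    qed
    also have "\<dots> = poly (\<xi> k) z * Phi (Suc k) \<xi> (shf k b) z"
      unfolding Phi_tm
      by (rule infsum_cmult_right, rule tm_summable[OF shf_Aalg[OF b] z]) simp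
    finally show ?thesis .
  qed
  ultimately show ?thesis by simp
qed

lemma ext_Aalg: "a \<in> Aalg k \<Longrightarrow> a \<in> Aalg (Suc k)"
proof -
  assume a: "a \<in> Aalg k"
  have "(\<lambda>n. norm (a n)) summable_on multi_idx (Suc k)"
    using a by (subst summable_on_cong_neutral[where T="multi_idx k"]) (auto simp: Aalg_def multi_idx_def)
  then show ?thesis using a multi_idx_mono by (auto simp: Aalg_def)
qed

lemma ext_norm: "a \<in> Aalg k \<Longrightarrow> normA (Suc k) a = normA k a"
  unfolding normA_def by (rule infsum_cong_neutral) (auto simp: Aalg_def multi_idx_def)

lemma ext_Phi: "a \<in> Aalg k \<Longrightarrow> Phi (Suc k) \<xi> a z = Phi k \<xi> a z"
  unfolding Phi_tm
proof (rule infsum_cong_neutral)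
  assume a: "a \<in> Aalg k"
  show "tm (Suc k) \<xi> a n z = 0" if "n \<in> multi_idx (Suc k) - multi_idx k" for n
    using a that by (simp add: Aalg_def tm_def)
  show "tm k \<xi> a n z = 0" if "n \<in> multi_idx k - multi_idx (Suc k)" for n
    using multi_idx_mono that by auto
  show "tm (Suc k) \<xi> a n z = tm k \<xi> a n z" if "n \<in> multi_idx (Suc k) \<inter> multi_idx k" for n
    using that by (simp add: tm_def multi_idx_def)
qed

lemma poly_witness:
  assumes "m \<ge> 1" "\<xi> 0 = [:0, 1:]"
  shows "\<exists>a\<in>Aalg m. \<forall>z. Phi m \<xi> a z = poly p z"
proof -
  define e where "e = (\<lambda>d::nat. \<lambda>i::nat. if i = 0 then d else 0)"
  define E where "E = e ` {..degree p}"
  define a where "a = (\<lambda>n. if n \<in> E then coeff p (n 0) else 0)"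
  have inj: "inj_on e A" for A by (auto simp: inj_on_def e_def fun_eq_iff)
  have EM: "E \<subseteq> multi_idx m" using assms(1) by (auto simp: E_def e_def multi_idx_def)
  have fin: "finite E" by (simp add: E_def)
  have a0: "a n = 0" if "n \<notin> E" for n using that by (simp add: a_def)
  have aA: "a \<in> Aalg m"
  proof -
    have "(\<lambda>n. norm (a n)) summable_on E" using fin by simp
    then have "(\<lambda>n. norm (a n)) summable_on multi_idx m"
    proof (rule summable_on_cong_neutral[THEN iffD1, rotated -1])
      show "norm (a n) = 0" if "n \<in> multi_idx m - E" for n using a0 that by simp
      show "norm (a n) = 0" if "n \<in> E - multi_idx m" for n using EM that by blast
    qed simp
    moreover have "\<forall>n. n \<notin> multi_idx m \<longrightarrow> a n = 0" using EM a0 by blast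
    ultimately show ?thesis by (simp add: Aalg_def)
  qed
  have aP: "\<forall>z. Phi m \<xi> a z = poly p z"
  proof
    fix z
    have "Phi m \<xi> a z = infsum (\<lambda>n. tm m \<xi> a n z) E"
      unfolding Phi_tm
    proof (rule infsum_cong_neutral)
      show "tm m \<xi> a n z = 0" if "n \<in> multi_idx m - E" for n using a0 that by (simp add: tm_def)
      show "tm m \<xi> a n z = 0" if "n \<in> E - multi_idx m" for n using EM that by blast
    qed simp
    also have "\<dots> = sum (\<lambda>n. tm m \<xi> a n z) E" using fin by (rule infsum_finite)
    also have "\<dots> = (\<Sum>d\<le>degree p. tm m \<xi> a (e d) z)"
      unfolding E_def using sum.reindex[OF inj, of "\<lambda>n. tm m \<xi> a n z" "{..degree p}"]
      by (simp add: comp_def)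
    also have "\<dots> = (\<Sum>d\<le>degree p. coeff p d * z ^ d)"
    proof (rule sum.cong[OF refl])
      fix d assume d: "d \<in> {..degree p}"
      obtain m' where m': "m = Suc m'" using assms(1) by (cases m) auto
      have "(\<Prod>i<m. poly (\<xi> i) z ^ e d i) = z ^ d"
        unfolding m' prod.lessThan_Suc_shift using assms(2) by (simp add: e_def)
      moreover have "e d \<in> E" using d by (simp add: E_def)
      moreover have "e d 0 = d" by (simp add: e_def)
      ultimately show "tm m \<xi> a (e d) z = coeff p d * z ^ d"
        by (simp add: tm_def a_def)
    qed
    also have "\<dots> = poly p z" by (simp add: poly_altdef)
    finally show "Phi m \<xi> a z = poly p z" .
  qed
  show ?thesis using aP aA by (rule bexI)
qed



lemma deriv_factor_aux:
  fixes f G :: "complex \<Rightarrow> complex"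
  assumes S: "open S" and G: "G holomorphic_on S"
    and f: "\<And>z. z \<in> S \<Longrightarrow> f z = (z - w) ^ r * G z"
  shows "i \<le> r \<Longrightarrow> \<exists>H. H holomorphic_on S \<and> (\<forall>z\<in>S. (deriv ^^ i) f z = (z - w) ^ (r - i) * H z)"
proof (induction i)
  case 0
  then show ?case using G f by auto
next
  case (Suc i)
  then obtain H where H: "H holomorphic_on S" "\<forall>z\<in>S. (deriv ^^ i) f z = (z - w) ^ (r - i) * H z"
    by auto
  obtain j where j: "r - i = Suc j" using Suc.prems by (metis Suc_diff_Suc Suc_le_lessD)
  have rj: "r - Suc i = j" using j by simp
  define H' where "H' = (\<lambda>z. of_nat (Suc j) * H z + (z - w) * deriv H z)"
  have "H' holomorphic_on S" unfolding H'_def using H(1) S by (intro holomorphic_intros) auto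
  moreover have "(deriv ^^ Suc i) f z = (z - w) ^ j * H' z" if z: "z \<in> S" for z
  proof -
    have "(deriv ^^ Suc i) f z = deriv ((deriv ^^ i) f) z" by simp
    also have "\<dots> = deriv (\<lambda>y. (y - w) ^ Suc j * H y) z"
    proof (rule deriv_cong_ev[OF _ refl])
      show "\<forall>\<^sub>F x in nhds z. (deriv ^^ i) f x = (x - w) ^ Suc j * H x"
        using eventually_nhds_in_open[OF S z] by eventually_elim (use H(2) j in auto)
    qed
    also have "\<dots> = of_nat (Suc j) * (z - w) ^ j * H z + (z - w) ^ Suc j * deriv H z"
    proof (rule DERIV_imp_deriv)
      have dH: "(H has_field_derivative deriv H z) (at z)"
        using holomorphic_derivI[OF H(1) S z] .
      show "((\<lambda>y. (y - w) ^ Suc j * H y) has_field_derivative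
              of_nat (Suc j) * (z - w) ^ j * H z + (z - w) ^ Suc j * deriv H z) (at z)"
        by (rule derivative_eq_intros dH refl | simp)+
    qed
    also have "\<dots> = (z - w) ^ j * H' z" by (simp add: H'_def algebra_simps)
    finally show ?thesis .
  qed
  ultimately show ?case unfolding rj by blast
qed

lemma deriv_factor_zero:
  fixes f G :: "complex \<Rightarrow> complex"
  assumes S: "open S" "w \<in> S" and G: "G holomorphic_on S"
    and f: "\<And>z. z \<in> S \<Longrightarrow> f z = (z - w) ^ r * G z" and i: "i < r"
  shows "(deriv ^^ i) f w = 0"
proof -
  obtain H where "\<forall>z\<in>S. (deriv ^^ i) f z = (z - w) ^ (r - i) * H z"
    using deriv_factor_aux[OF S(1) G f, of i] i by auto
  then show ?thesis using S(2) i by simp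
qed


lemma normA_nonneg: "normA m a \<ge> 0"
  unfolding normA_def by (rule infsum_nonneg) simp

theorem lemma3p4:
  fixes k :: nat and \<xi> :: "nat \<Rightarrow> complex poly"
  assumes "k \<ge> 1"
    and "\<forall>j<k+1. poly (\<xi> j) 0 = 0"
    and "\<xi> 0 = [:0, 1:]"
  shows "(\<forall>p. piX (k+1) \<xi> p \<le> piX k \<xi> p) \<and>
    (\<forall>U q. open U \<and> connected U \<and> 0 \<in> U \<and> U \<subseteq> ball 0 (gammaP k \<xi>) \<and>
       poly (\<xi> k) ` U \<subseteq> ball 0 1 \<and> q \<noteq> 0 \<and> q dvd \<xi> k \<and>
       (\<forall>w. poly q w = 0 \<longrightarrow> w \<in> U) \<longrightarrow>
       (\<forall>p. piXq k \<xi> q p \<le> piX (k+1) \<xi> p))"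
proof -
  note k1 = assms(1) and x0 = assms(3)
  have h1: "\<forall>j<Suc k. poly (\<xi> j) 0 = 0" using assms(2) by simp
  have h0: "\<forall>j<k. poly (\<xi> j) 0 = 0" using assms(2) by simp
  have k1': "Suc k \<ge> 1" by simp
  have part1: "piX (Suc k) \<xi> p \<le> piX k \<xi> p" for p
  proof -
    define A where "A = {normA k a | a. a \<in> Aalg k \<and> (\<forall>z\<in>ball 0 (gammaP k \<xi>). Phi k \<xi> a z = poly p z)}"
    define B where "B = {normA (Suc k) a | a. a \<in> Aalg (Suc k) \<and> (\<forall>z\<in>ball 0 (gammaP (Suc k) \<xi>). Phi (Suc k) \<xi> a z = poly p z)}"
    have "Inf B \<le> Inf A"
    proof (rule cInf_superset_mono)
      obtain a where "a \<in> Aalg k" "\<forall>z. Phi k \<xi> a z = poly p z"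
        using poly_witness[of k \<xi>, OF k1 x0] by blast
      then show "A \<noteq> {}" unfolding A_def by blast
      show "bdd_below B" unfolding B_def bdd_below_def using normA_nonneg by blast
      have gm: "gammaP (Suc k) \<xi> \<le> gammaP k \<xi>"
        using gammaP_mono[of k \<xi>, OF k1 x0] h1 by simp
      show "A \<subseteq> B"
      proof
        fix x assume "x \<in> A"
        then obtain a where a: "x = normA k a" "a \<in> Aalg k"
          "\<forall>z\<in>ball 0 (gammaP k \<xi>). Phi k \<xi> a z = poly p z" unfolding A_def by blast
        have "\<forall>z\<in>ball 0 (gammaP (Suc k) \<xi>). Phi (Suc k) \<xi> a z = poly p z"
          using a(3) gm ext_Phi[OF a(2)] by auto
        moreover have "x = normA (Suc k) a" using ext_norm[OF a(2)] a(1) by simp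
        ultimately show "x \<in> B" unfolding B_def using ext_Aalg[OF a(2)] by blast
      qed
    qed
    then show ?thesis unfolding piX_def A_def B_def by simp
  qed
  have part2: "piXq k \<xi> q p \<le> piX (Suc k) \<xi> p"
    if U: "open U" "connected U" "0 \<in> U" "U \<subseteq> ball 0 (gammaP k \<xi>)"
       "poly (\<xi> k) ` U \<subseteq> ball 0 1" and q: "q \<noteq> 0" "q dvd \<xi> k"
       and qU: "\<forall>w. poly q w = 0 \<longrightarrow> w \<in> U" for U q p
  proof -
    define Q where "Q = {normA k a | a. a \<in> Aalg k \<and> pdivides q (\<lambda>z. poly p z - Phi k \<xi> a z)}"
    define P where "P = {normA (Suc k) a | a. a \<in> Aalg (Suc k) \<and> (\<forall>z\<in>ball 0 (gammaP (Suc k) \<xi>). Phi (Suc k) \<xi> a z = poly p z)}"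
    have bQ: "bdd_below Q" unfolding Q_def bdd_below_def using normA_nonneg by blast
    have UV: "U \<subseteq> VV (Suc k) \<xi>"
    proof
      fix z assume z: "z \<in> U"
      have "norm (poly (\<xi> j) z) < 1" if "j < Suc k" for j
      proof (cases "j < k")
        case True
        then show ?thesis using gammaP_ball[of k \<xi>, OF k1 x0 h0] z U(4) by blast
      next
        case False
        then have "j = k" using that by simp
        then show ?thesis using U(5) z by auto
      qed
      then show "z \<in> VV (Suc k) \<xi>" by (simp add: VV_def)
    qed
    have le1: "\<forall>j<Suc k. norm (poly (\<xi> j) z) \<le> 1" if "z \<in> U" for z
      using UV that by (auto simp: VV_def less_imp_le)
    have "Inf Q \<le> Inf P"
    proof (rule cInf_greatest)
      obtain a where "a \<in> Aalg (Suc k)" "\<forall>z. Phi (Suc k) \<xi> a z = poly p z"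
        using poly_witness[of "Suc k" \<xi>, OF k1' x0] by blast
      then show "P \<noteq> {}" unfolding P_def by blast
    next
      fix x assume "x \<in> P"
      then obtain b where b: "x = normA (Suc k) b" "b \<in> Aalg (Suc k)"
        "\<forall>z\<in>ball 0 (gammaP (Suc k) \<xi>). Phi (Suc k) \<xi> b z = poly p z" unfolding P_def by blast
      define a where "a = rst k b"
      have aA: "a \<in> Aalg k" unfolding a_def by (rule rst_Aalg[OF b(2)])
      have an: "normA k a \<le> x" unfolding a_def b(1) by (rule rst_norm[OF b(2)])
      have eqU: "Phi (Suc k) \<xi> b z = poly p z" if z: "z \<in> U" for z
      proof (rule analytic_continuation_open[where s="ball 0 (gammaP (Suc k) \<xi>) \<inter> U" and s'=U and f="Phi (Suc k) \<xi> b" and g="poly p"])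
        show "open (ball 0 (gammaP (Suc k) \<xi>) \<inter> U)" using U(1) by auto
        show "ball 0 (gammaP (Suc k) \<xi>) \<inter> U \<noteq> {}"
        proof -
          have "0 \<in> ball 0 (gammaP (Suc k) \<xi>) \<inter> U"
            using gammaP_pos[of "Suc k" \<xi>, OF k1' x0 h1] U(3) by simp
          then show ?thesis by blast
        qed
        show "Phi (Suc k) \<xi> b holomorphic_on U"
          using Phi_holo[OF b(2)] UV by (rule holomorphic_on_subset)
        show "poly p holomorphic_on U" by (intro holomorphic_intros)
      qed (use U z b(3) in auto)
      have dec: "poly p z - Phi k \<xi> a z = poly (\<xi> k) z * Phi (Suc k) \<xi> (shf k b) z" if z: "z \<in> U" for z
        using Phi_split[OF b(2) le1[OF z]] eqU[OF z] unfolding a_def by simp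
      have "pdivides q (\<lambda>z. poly p z - Phi k \<xi> a z)"
        unfolding pdivides_def
      proof (intro allI impI)
        fix w i assume w: "poly q w = 0" and i: "i < order w q"
        have wU: "w \<in> U" using qU w by blast
        obtain s0 where s0: "\<xi> k = q * s0" using q(2) by (auto elim: dvdE)
        define r where "r = order w q"
        have "[:-w, 1:] ^ r dvd q" unfolding r_def using order_divides by blast
        then obtain q1 where q1: "q = [:-w, 1:] ^ r * q1" by (auto elim: dvdE)
        have pq: "poly q z = (z - w) ^ r * poly q1 z" for z
          by (subst q1) (simp add: poly_power)
        define G where "G = (\<lambda>z. poly q1 z * poly s0 z * Phi (Suc k) \<xi> (shf k b) z)"
        have "G holomorphic_on U" unfolding G_def
          using Phi_holo[OF shf_Aalg[OF b(2)]] UV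
          by (intro holomorphic_intros) (rule holomorphic_on_subset)
        moreover have "poly p z - Phi k \<xi> a z = (z - w) ^ order w q * G z" if "z \<in> U" for z
          unfolding dec[OF that] G_def s0 poly_mult pq r_def[symmetric] by (simp add: algebra_simps)
        ultimately show "(deriv ^^ i) (\<lambda>z. poly p z - Phi k \<xi> a z) w = 0"
          by (rule deriv_factor_zero[OF U(1) wU _ _ i])
      qed
      then have "normA k a \<in> Q" unfolding Q_def using aA by blast
      then have "Inf Q \<le> normA k a" using bQ by (rule cInf_lower)
      then show "Inf Q \<le> x" using an by simp
    qed
    then show ?thesis unfolding piXq_def piX_def Q_def P_def by simp
  qed
  show ?thesis
  proof (intro conjI allI impI)
    fix p show "piX (k + 1) \<xi> p \<le> piX k \<xi> p" using part1 by simp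
  next
    fix U q p
    assume "open U \<and> connected U \<and> 0 \<in> U \<and> U \<subseteq> ball 0 (gammaP k \<xi>) \<and>
       poly (\<xi> k) ` U \<subseteq> ball 0 1 \<and> q \<noteq> 0 \<and> q dvd \<xi> k \<and>
       (\<forall>w. poly q w = 0 \<longrightarrow> w \<in> U)"
    then show "piXq k \<xi> q p \<le> piX (k + 1) \<xi> p" using part2[of U q p] by simp
  qed
qed

end
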